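(* Let $T$ be a tree and $u\in V(T)$ a vertex with $d_T(u)\ge 3$ that is adjacent to a leaf $v$ of $T$. Let $T'$ be any tree obtained by smoothing $u$ in $T-v$. Then $b(T)\le b(T')+1$; more precisely, $T$ has a burning sequence of length at most $b(T')+1$ whose first term is $v$.
   Context: All graphs are finite and simple. $T-v$ is the tree obtained by deleting $v$ and its incident edge. Smoothing: let $S$ be a tree and $w\in V(S)$ with $N_S(w)=\{w_1,\dots,w_q\}$, $q\ge 2$, and suppose exactly $p$ of these neighbours are leaves of $S$, labelled $w_1,\dots,w_p$ (if $p>0$); the remaining neighbours are labelled arbitrarily. A tree obtained by smoothing $w$ in $S$ is formed from $S$ by deleting $w$ (and its incident edges) and then: if $p\le 2$, adding the edges of the path $w_1w_3w_4\cdots w_qw_2$; if $p\ge 3$, additionally deleting $w_3,\dots,w_p$ and adding the edges of the path $w_1w_{p+1}w_{p+2}\cdots w_qw_2$. Burning process of a connected graph $G$: initially all vertices are unburned. In each round $r\ge 1$, one vertex $x_r$ that is unburned at the end of round $r-1$ is chosen as the source of round $r$; in round $r$ the source $x_r$ becomes burned, and so does every vertex that was unburned at the end of round $r-1$ and is adjacent to a vertex burned at the end of round $r-1$. Burned vertices stay burned. If all vertices are burned at the end of round $k$ (and not earlier), $(x_1,\dots,x_k)$ is called a burning sequence for $G$ of length $k$. The burning number $b(G)$ is the minimum length of a burning sequence for $G$. *)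

theory Defs
  imports Main
begin

type_synonym 'a graph = "'a set \<times> 'a set set"

definition verts :: "'a graph \<Rightarrow> 'a set" where "verts G = fst G"
definition edges :: "'a graph \<Rightarrow> 'a set set" where "edges G = snd G"

definition graph :: "'a graph \<Rightarrow> bool" where
  "graph G \<longleftrightarrow> finite (verts G) \<and>
     (\<forall>e\<in>edges G. \<exists>x y. x \<noteq> y \<and> e = {x, y} \<and> x \<in> verts G \<and> y \<in> verts G)"

definition adj :: "'a graph \<Rightarrow> 'a \<Rightarrow> 'a \<Rightarrow> bool" where
  "adj G x y \<longleftrightarrow> x \<noteq> y \<and> {x, y} \<in> edges G"

definition nbrs :: "'a graph \<Rightarrow> 'a \<Rightarrow> 'a set" where
  "nbrs G x = {y. adj G x y}"

definition degree :: "'a graph \<Rightarrow> 'a \<Rightarrow> nat" where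
  "degree G x = card (nbrs G x)"

definition leaf :: "'a graph \<Rightarrow> 'a \<Rightarrow> bool" where
  "leaf G x \<longleftrightarrow> x \<in> verts G \<and> degree G x = 1"

definition walk :: "'a graph \<Rightarrow> 'a list \<Rightarrow> bool" where
  "walk G xs \<longleftrightarrow> xs \<noteq> [] \<and> set xs \<subseteq> verts G \<and>
     (\<forall>i. Suc i < length xs \<longrightarrow> adj G (xs ! i) (xs ! Suc i))"

definition connected :: "'a graph \<Rightarrow> bool" where
  "connected G \<longleftrightarrow> verts G \<noteq> {} \<and>
     (\<forall>x\<in>verts G. \<forall>y\<in>verts G. \<exists>xs. walk G xs \<and> hd xs = x \<and> last xs = y)"

definition cycle :: "'a graph \<Rightarrow> 'a list \<Rightarrow> bool" where
  "cycle G xs \<longleftrightarrow> length xs \<ge> 3 \<and> distinct xs \<and> walk G xs \<and> adj G (last xs) (hd xs)"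

definition tree :: "'a graph \<Rightarrow> bool" where
  "tree G \<longleftrightarrow> graph G \<and> connected G \<and> \<not> (\<exists>xs. cycle G xs)"

definition del_vert :: "'a graph \<Rightarrow> 'a \<Rightarrow> 'a graph" where
  "del_vert G v = (verts G - {v}, {e\<in>edges G. v \<notin> e})"

definition path_edges :: "'a list \<Rightarrow> 'a set set" where
  "path_edges P = {{P ! i, P ! Suc i} | i. Suc i < length P}"

text \<open>The list ws = [w1,...,wq] enumerates N_S(w),
  the first p entries being exactly the leaf neighbours. Deleted vertices: w and w3..wp
  (empty range if p \<le> 2). Added path: w1 w_{max 3 (p+1)} ... wq w2.\<close>
definition smoothing :: "'a graph \<Rightarrow> 'a \<Rightarrow> 'a graph \<Rightarrow> bool" where
  "smoothing S w S' \<longleftrightarrow> w \<in> verts S \<and>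
     (\<exists>ws p. distinct ws \<and> set ws = nbrs S w \<and> length ws \<ge> 2 \<and>
        p = card {x \<in> nbrs S w. leaf S x} \<and>
        (\<forall>i<length ws. i < p \<longleftrightarrow> leaf S (ws ! i)) \<and>
        (let D = {w} \<union> set (drop 2 (take p ws));
             P = ws ! 0 # drop (max 2 p) ws @ [ws ! 1]
         in S' = (verts S - D, {e\<in>edges S. e \<inter> D = {}} \<union> path_edges P)))"

text \<open>Burning process: burned G xs r = set of vertices burned at the end of round r.\<close>
fun burned :: "'a graph \<Rightarrow> 'a list \<Rightarrow> nat \<Rightarrow> 'a set" where
  "burned G xs 0 = {}"
| "burned G xs (Suc r) = burned G xs r \<union> {xs ! r} \<union>
      {y \<in> verts G. \<exists>z\<in>burned G xs r. adj G z y}"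

definition burning_seq :: "'a graph \<Rightarrow> 'a list \<Rightarrow> bool" where
  "burning_seq G xs \<longleftrightarrow>
     (\<forall>r<length xs. xs ! r \<in> verts G \<and> xs ! r \<notin> burned G xs r) \<and>
     burned G xs (length xs) = verts G \<and>
     (\<forall>r<length xs. burned G xs r \<noteq> verts G)"

definition burning_number :: "'a graph \<Rightarrow> nat" where
  "burning_number G = (LEAST k. \<exists>xs. burning_seq G xs \<and> length xs = k)"

end

theory Submission
  imports Defs
begin

definition stp :: "'a graph \<Rightarrow> 'a set \<Rightarrow> 'a \<Rightarrow> 'a set" where
  "stp G B x = B \<union> {x} \<union> {y \<in> verts G. \<exists>z\<in>B. adj G z y}"

fun runl :: "'a graph \<Rightarrow> 'a set \<Rightarrow> 'a list \<Rightarrow> 'a set" where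
  "runl G B [] = B"
| "runl G B (x#xs) = runl G (stp G B x) xs"

fun bs :: "'a graph \<Rightarrow> 'a set \<Rightarrow> 'a list \<Rightarrow> bool" where
  "bs G B [] = (B = verts G)"
| "bs G B (x#xs) = (B \<noteq> verts G \<and> x \<in> verts G \<and> x \<notin> B \<and> bs G (stp G B x) xs)"

lemma runl_append: "runl G B (xs @ [x]) = stp G (runl G B xs) x"
  by (induction xs arbitrary: B) auto

lemma burned_runl: "r \<le> length xs \<Longrightarrow> burned G xs r = runl G {} (take r xs)"
proof (induction r)
  case 0
  then show ?case by simp
next
  case (Suc r)
  then have "take (Suc r) xs = take r xs @ [xs ! r]"
    by (simp add: take_Suc_conv_app_nth)
  then show ?case using Suc by (simp add: runl_append stp_def)
qed

lemma bs_props: "bs G B xs \<Longrightarrow>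
  (\<forall>r<length xs. xs!r \<in> verts G \<and> xs!r \<notin> runl G B (take r xs) \<and> runl G B (take r xs) \<noteq> verts G)
  \<and> runl G B xs = verts G"
proof (induction xs arbitrary: B)
  case Nil
  then show ?case by simp
next
  case (Cons x xs)
  have b: "bs G (stp G B x) xs" using Cons.prems by simp
  have IH: "(\<forall>r<length xs. xs!r \<in> verts G \<and> xs!r \<notin> runl G (stp G B x) (take r xs) \<and> runl G (stp G B x) (take r xs) \<noteq> verts G)
  \<and> runl G (stp G B x) xs = verts G" by (rule Cons.IH[OF b])
  have A: "\<forall>r<length (x#xs). (x # xs) ! r \<in> verts G \<and> (x # xs) ! r \<notin> runl G B (take r (x # xs)) \<and> runl G B (take r (x # xs)) \<noteq> verts G"
  proof (intro allI impI)
    fix r assume r: "r < length (x#xs)"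
    show "(x # xs) ! r \<in> verts G \<and> (x # xs) ! r \<notin> runl G B (take r (x # xs)) \<and> runl G B (take r (x # xs)) \<noteq> verts G"
    proof (cases r)
      case 0
      then show ?thesis using Cons.prems by simp
    next
      case (Suc r')
      then show ?thesis using IH r by simp
    qed
  qed
  have "runl G B (x # xs) = verts G" using IH by simp
  with A show ?case by blast
qed

lemma bs_burning: "bs G {} xs \<Longrightarrow> burning_seq G xs"
  using bs_props[of G "{}" xs] unfolding burning_seq_def
  by (auto simp: burned_runl)

lemma stp_mono: "B \<subseteq> B' \<Longrightarrow> stp G B x \<subseteq> stp G B' x"
  unfolding stp_def by auto

lemma runl_mono: "B \<subseteq> B' \<Longrightarrow> runl G B ys \<subseteq> runl G B' ys"
  by (induction ys arbitrary: B B') (auto intro: stp_mono)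

lemma runl_sub: "B \<subseteq> verts G \<Longrightarrow> set ys \<subseteq> verts G \<Longrightarrow> runl G B ys \<subseteq> verts G"
  by (induction ys arbitrary: B) (auto simp: stp_def)

lemma runl_sup: "B \<union> set ys \<subseteq> runl G B ys"
proof (induction ys arbitrary: B)
  case Nil
  then show ?case by simp
next
  case (Cons y ys)
  from Cons[of "stp G B y"] show ?case by (auto simp: stp_def)
qed

lemma cover_to_bs:
  assumes "B \<subseteq> verts G" "set ys \<subseteq> verts G" "verts G \<subseteq> runl G B ys"
  shows "\<exists>xs. bs G B xs \<and> length xs \<le> length ys \<and>
          (ys \<noteq> [] \<longrightarrow> hd ys \<notin> B \<longrightarrow> xs \<noteq> [] \<and> hd xs = hd ys)"
  using assms
proof (induction ys arbitrary: B)
  case Nil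
  then show ?case by (intro exI[of _ "[]"]) auto
next
  case (Cons y ys)
  show ?case
  proof (cases "B = verts G")
    case True
    then show ?thesis using Cons.prems by (intro exI[of _ "[]"]) auto
  next
    case False
    show ?thesis
    proof (cases "y \<in> B")
      case False
      have "stp G B y \<subseteq> verts G" using Cons.prems unfolding stp_def by auto
      moreover have "verts G \<subseteq> runl G (stp G B y) ys" using Cons.prems by simp
      ultimately obtain xs where "bs G (stp G B y) xs" "length xs \<le> length ys"
        using Cons.IH[of "stp G B y"] Cons.prems by auto
      then show ?thesis using False \<open>B \<noteq> verts G\<close> Cons.prems
        by (intro exI[of _ "y#xs"]) auto
    next
      case True
      obtain z where z: "z \<in> verts G" "z \<notin> B" using \<open>B \<noteq> verts G\<close> Cons.prems by auto
      have "stp G B y \<subseteq> stp G B z" using True unfolding stp_def by auto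
      then have "runl G (stp G B y) ys \<subseteq> runl G (stp G B z) ys" by (rule runl_mono)
      then have "verts G \<subseteq> runl G (stp G B z) ys" using Cons.prems by simp
      moreover have "stp G B z \<subseteq> verts G" using Cons.prems z unfolding stp_def by auto
      ultimately obtain xs where "bs G (stp G B z) xs" "length xs \<le> length ys"
        using Cons.IH[of "stp G B z"] Cons.prems by auto
      then show ?thesis using True z \<open>B \<noteq> verts G\<close>
        by (intro exI[of _ "z#xs"]) auto
    qed
  qed
qed

lemma exists_burning: "finite (verts G) \<Longrightarrow> \<exists>xs. burning_seq G xs"
proof -
  assume "finite (verts G)"
  then obtain ys where ys: "set ys = verts G" using finite_list by blast
  have "verts G \<subseteq> runl G {} ys" using runl_sup[of "{}" ys G] ys by simp
  then obtain xs where "bs G {} xs" using cover_to_bs[of "{}" G ys] ys by auto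
  then show ?thesis using bs_burning by blast
qed

lemma burned_mono: "m \<le> n \<Longrightarrow> burned G xs m \<subseteq> burned G xs n"
proof (induction n rule: dec_induct)
  case base
  then show ?case by simp
next
  case (step n)
  then show ?case by auto
qed

lemma inv:
  assumes "\<And>z y. adj G' z y \<Longrightarrow> y \<in> verts G' \<Longrightarrow> adj G z y \<or> y \<in> N"
    and "verts G' \<subseteq> verts G" and "N \<subseteq> burned G (v#xs) (Suc (Suc (Suc 0)))"
  shows "burned G' xs r \<subseteq> burned G (v#xs) (Suc r)"
proof (induction r)
  case 0
  then show ?case by simp
next
  case (Suc r)
  show ?case
  proof
    fix y assume y: "y \<in> burned G' xs (Suc r)"
    have m: "burned G (v#xs) (Suc r) \<subseteq> burned G (v#xs) (Suc (Suc r))" by auto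
    show "y \<in> burned G (v#xs) (Suc (Suc r))"
    proof (cases "y \<in> burned G' xs r \<or> y = xs ! r")
      case True
      then show ?thesis using Suc m by auto
    next
      case False
      then obtain z where z: "z \<in> burned G' xs r" "adj G' z y" "y \<in> verts G'" using y by auto
      have "r \<noteq> 0" proof assume "r = 0" then show False using z(1) by simp qed
      from assms(1)[OF z(2,3)] show ?thesis
      proof
        assume "adj G z y"
        moreover have "z \<in> burned G (v#xs) (Suc r)" using z(1) Suc.IH by blast
        moreover have "y \<in> verts G" using z(3) assms(2) by blast
        ultimately have "y \<in> {y \<in> verts G. \<exists>z\<in>burned G (v#xs) (Suc r). adj G z y}" by blast
        then show ?thesis by (simp only: burned.simps) blast
      next
        assume "y \<in> N"
        moreover have "burned G (v#xs) (Suc (Suc (Suc 0))) \<subseteq> burned G (v#xs) (Suc (Suc r))"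
          using \<open>r \<noteq> 0\<close> by (intro burned_mono) simp
        ultimately show ?thesis using assms(3) by blast
      qed
    qed
  qed
qed

theorem mainTheorem8:
  fixes T T' :: "'a graph" and u v :: 'a
  assumes "tree T"
    and "u \<in> verts T"
    and "degree T u \<ge> 3"
    and "leaf T v"
    and "adj T u v"
    and "smoothing (del_vert T v) u T'"
  shows "burning_number T \<le> burning_number T' + 1 \<and>
         (\<exists>xs. burning_seq T xs \<and> length xs \<le> burning_number T' + 1 \<and>
               xs \<noteq> [] \<and> hd xs = v)"
proof -
  define S where "S = del_vert T v"
  have gT: "graph T" using assms(1) unfolding tree_def by blast
  have finT: "finite (verts T)" using gT unfolding graph_def by blast
  have vT: "v \<in> verts T" using assms(4) unfolding leaf_def by blast
  have adjE: "\<And>x y. adj T x y \<Longrightarrow> x \<in> verts T \<and> y \<in> verts T"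
  proof -
    fix x y assume "adj T x y"
    then have "x \<noteq> y" "{x,y} \<in> edges T" unfolding adj_def by auto
    then obtain a b where "{x,y} = {a,b}" "a \<in> verts T" "b \<in> verts T"
      using gT unfolding graph_def by blast
    then show "x \<in> verts T \<and> y \<in> verts T" by (auto simp: doubleton_eq_iff)
  qed
  have vS: "verts S = verts T - {v}" and eS: "edges S = {e\<in>edges T. v \<notin> e}"
    unfolding S_def del_vert_def verts_def edges_def by auto
  have adjS: "\<And>x y. adj S x y \<Longrightarrow> adj T x y \<and> x \<noteq> v \<and> y \<noteq> v"
    unfolding adj_def eS by auto
  have nbS: "nbrs S u \<subseteq> nbrs T u - {v, u}"
    using adjS unfolding nbrs_def adj_def by auto
  obtain ws p D P where ws: "distinct ws" "set ws = nbrs S u" "2 \<le> length ws"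
    and D: "D = {u} \<union> set (drop 2 (take p ws))"
    and P: "P = ws ! 0 # drop (max 2 p) ws @ [ws ! 1]"
    and T': "T' = (verts S - D, {e\<in>edges S. e \<inter> D = {}} \<union> path_edges P)"
    using assms(6) unfolding smoothing_def Let_def S_def by blast
  have vT': "verts T' = verts S - D" and eT': "edges T' = {e\<in>edges S. e \<inter> D = {}} \<union> path_edges P"
    using T' unfolding verts_def edges_def by auto
  have setP: "set P \<subseteq> set ws" using ws(3) unfolding P
    by (auto dest: in_set_dropD intro!: nth_mem)
  have DT: "D \<subseteq> {u} \<union> nbrs T u"
  proof -
    have "set (drop 2 (take p ws)) \<subseteq> set ws"
      by (meson set_drop_subset set_take_subset subset_trans)
    then show ?thesis using D ws(2) nbS by auto
  qed
  have vT'T: "verts T' \<subseteq> verts T" using vT' vS by auto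
  have finT': "finite (verts T')" using finite_subset[OF vT'T finT] .
  define k where "k = burning_number T'"
  have "\<exists>xs. burning_seq T' xs \<and> length xs = k"
  proof -
    obtain zs where "burning_seq T' zs" using exists_burning[OF finT'] by blast
    then have "\<exists>n. \<exists>xs. burning_seq T' xs \<and> length xs = n" by blast
    then show ?thesis unfolding k_def burning_number_def by (rule LeastI_ex)
  qed
  then obtain xs where xs: "burning_seq T' xs" "length xs = k" by blast
  have xsT: "set xs \<subseteq> verts T"
  proof
    fix x assume "x \<in> set xs"
    then obtain i where i: "i < length xs" "x = xs ! i" by (auto simp: in_set_conv_nth)
    have "xs ! i \<in> verts T'" using xs(1) i(1) unfolding burning_seq_def by blast
    then show "x \<in> verts T" using i(2) vT'T by blast
  qed
  have fin': "burned T' xs k = verts T'" using xs unfolding burning_seq_def by simp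
  obtain a b rest where wab: "ws = a # b # rest"
    using ws(3) by (cases ws; cases "tl ws") auto
  have "a \<in> nbrs S u" "b \<in> nbrs S u" using ws(2) wab by auto
  then have ab: "a \<in> verts T'" "b \<in> verts T'" "a \<noteq> b"
  proof -
    have sub: "set (drop 2 (take p ws)) \<subseteq> set rest"
    proof -
      have "drop 2 (take p ws) = take (p-2) rest" using wab by (simp add: drop_take)
      then show ?thesis by (simp add: set_take_subset)
    qed
    have dist: "a \<notin> set rest" "b \<notin> set rest" "a \<noteq> b" using ws(1) wab by auto
    have "a \<in> verts T \<and> a \<noteq> v \<and> a \<noteq> u" "b \<in> verts T \<and> b \<noteq> v \<and> b \<noteq> u"
      using \<open>a \<in> nbrs S u\<close> \<open>b \<in> nbrs S u\<close> nbS adjE unfolding nbrs_def by auto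
    then show "a \<in> verts T'" "b \<in> verts T'" "a \<noteq> b"
      using sub dist unfolding vT' vS D by auto
  qed
  have k2: "2 \<le> k"
  proof (rule ccontr)
    assume "\<not> 2 \<le> k"
    then have "k = 0 \<or> k = 1" by auto
    then have "burned T' xs k \<subseteq> {xs ! 0}" by auto
    then show False using fin' ab by auto
  qed
  have N3: "nbrs T u \<subseteq> burned T (v#xs) (Suc (Suc (Suc 0)))"
  proof -
    have "v \<in> burned T (v#xs) (Suc 0)" by simp
    moreover have "adj T v u" using assms(5) unfolding adj_def by (auto simp: insert_commute)
    ultimately have "u \<in> burned T (v#xs) (Suc (Suc 0))" using assms(2)
      by (simp only: burned.simps) blast
    then show ?thesis using adjE unfolding nbrs_def
      by (simp only: burned.simps) blast
  qed
  have u3: "u \<in> burned T (v#xs) (Suc (Suc (Suc 0)))" and v3: "v \<in> burned T (v#xs) (Suc (Suc (Suc 0)))"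
  proof -
    have "adj T u v" by (rule assms(5))
    then have "u \<in> nbrs T v" unfolding nbrs_def adj_def by (auto simp: insert_commute)
    have "v \<in> nbrs T u" using assms(5) unfolding nbrs_def by simp
    then show "v \<in> burned T (v#xs) (Suc (Suc (Suc 0)))" using N3 by blast
    have "v \<in> burned T (v#xs) (Suc 0)" by simp
    moreover have "adj T v u" using assms(5) unfolding adj_def by (auto simp: insert_commute)
    ultimately have "u \<in> burned T (v#xs) (Suc (Suc 0))" using assms(2)
      by (simp only: burned.simps) blast
    then show "u \<in> burned T (v#xs) (Suc (Suc (Suc 0)))" by (simp only: burned.simps) blast
  qed
  have cond: "\<And>z y. adj T' z y \<Longrightarrow> y \<in> verts T' \<Longrightarrow> adj T z y \<or> y \<in> nbrs T u"
  proof -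
    fix z y assume a: "adj T' z y" "y \<in> verts T'"
    then have zy: "z \<noteq> y" "{z,y} \<in> edges T'" unfolding adj_def by auto
    show "adj T z y \<or> y \<in> nbrs T u"
    proof (cases "{z,y} \<in> edges S")
      case True
      then show ?thesis using zy eS unfolding adj_def by auto
    next
      case False
      then have "{z,y} \<in> path_edges P" using zy eT' by auto
      then obtain i where "{z,y} = {P ! i, P ! Suc i}" "Suc i < length P"
        unfolding path_edges_def by blast
      then have "y \<in> set P" by (auto simp: doubleton_eq_iff)
      then show ?thesis using setP ws(2) nbS by auto
    qed
  qed
  have invk: "burned T' xs k \<subseteq> burned T (v#xs) (Suc k)"
    by (rule inv[OF cond vT'T N3])
  have m3: "burned T (v#xs) (Suc (Suc (Suc 0))) \<subseteq> burned T (v#xs) (Suc k)"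
    using k2 by (intro burned_mono) simp
  have cover: "verts T \<subseteq> burned T (v#xs) (Suc k)"
  proof
    fix y assume y: "y \<in> verts T"
    show "y \<in> burned T (v#xs) (Suc k)"
    proof (cases "y \<in> verts T'")
      case True
      then show ?thesis using fin' invk by blast
    next
      case False
      then have "y = v \<or> y = u \<or> y \<in> nbrs T u" using y vT' vS DT by auto
      then show ?thesis using N3 u3 v3 m3 by blast
    qed
  qed
  have runl_eq: "burned T (v#xs) (Suc k) = runl T {} (v#xs)"
    using burned_runl[of "Suc k" "v#xs" T] xs(2) by simp
  have "set (v#xs) \<subseteq> verts T" using vT xsT by simp
  then obtain ys where ys: "bs T {} ys" "length ys \<le> length (v#xs)" "ys \<noteq> [] \<and> hd ys = v"
    using cover_to_bs[of "{}" T "v#xs"] cover runl_eq by auto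
  have bsT: "burning_seq T ys" using bs_burning[OF ys(1)] .
  have "burning_number T \<le> length ys"
    unfolding burning_number_def using bsT by (intro Least_le) blast
  then show ?thesis using ys bsT xs(2) k_def by auto
qed

end
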